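(* Let $\Pi=(\mathcal{S},\mathcal{R})$ be a CRN protocol and let $S$ be a strongly connected component of its configuration digraph $D^{\Pi}$. Then $D^{\Pi}$ admits a weakly fair infinite path all of whose nodes lie in $S$ if and only if no reaction in $\mathcal{R}$ escapes from $S$.
   Context: A CRN protocol is a pair $\Pi=(\mathcal{S},\mathcal{R})$ with $\mathcal{S}$ a finite set of species and $\mathcal{R}\subset\mathbb{N}^{\mathcal{S}}\times\mathbb{N}^{\mathcal{S}}$ a finite set of reactions $\alpha=(\mathbf{r},\mathbf{p})$ ($\mathbf{r}$ = reactants, $\mathbf{p}$ = products, $\mathbb{N}=\{0,1,2,\dots\}$), where every reaction has $\|\mathbf{r}\|_1\in\{1,2\}$ and $\|\mathbf{r}\|_1\le\|\mathbf{p}\|_1$; for every $\mathbf{r}$ with $1\le\|\mathbf{r}\|_1\le 2$ the set $\mathcal{R}(\mathbf{r})$ of reactions with reactant vector $\mathbf{r}$ is nonempty; reactions with $\mathbf{r}=\mathbf{p}$ are void, and if $(\mathbf{r},\mathbf{r})\in\mathcal{R}$ then $\mathcal{R}(\mathbf{r})=\{(\mathbf{r},\mathbf{r})\}$. A configuration is $\mathbf{c}\in\mathbb{N}^{\mathcal{S}}$ with $\|\mathbf{c}\|_1\ge 1$. A reaction $(\mathbf{r},\mathbf{p})$ is applicable to $\mathbf{c}$ if $\mathbf{r}\le\mathbf{c}$ componentwise; $\operatorname{app}(\mathbf{c})$ is the set of applicable reactions, and then $\alpha(\mathbf{c})=\mathbf{c}-\mathbf{r}+\mathbf{p}$. The protocol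 respects finite density: the set of configurations reachable from any configuration is finite, with molecular counts $O(\|\mathbf{c}\|_1)$. The configuration digraph $D^{\Pi}$ has all configurations as nodes and, for each configuration $\mathbf{c}$ and each $\alpha\in\operatorname{app}(\mathbf{c})$, an $\alpha$-labeled edge from $\mathbf{c}$ to $\alpha(\mathbf{c})$. Infinite paths in $D^{\Pi}$ correspond to executions $\langle\mathbf{c}^t,\alpha^t\rangle_{t\ge0}$ ($\alpha^t\in\operatorname{app}(\mathbf{c}^t)$, $\mathbf{c}^{t+1}=\alpha^t(\mathbf{c}^t)$). An execution (path) is weakly fair if for every $t\ge0$ and every $\alpha\in\operatorname{app}(\mathbf{c}^t)$ there is $t'\ge t$ with $\alpha^{t'}=\alpha$ or $\alpha\notin\operatorname{app}(\mathbf{c}^{t'})$. A reaction $\alpha$ escapes from a component $S$ if for every $\mathbf{c}\in S$, $\alpha\in\operatorname{app}(\mathbf{c})$ and $\alpha(\mathbf{c})\notin S$. *)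

theory Defs
  imports Main
begin

text \<open>Species form a finite type 's; vectors in N^S are functions 's => nat.
A reaction is a pair (r, p) of reactant and product vectors.\<close>

type_synonym 's vec = "'s \<Rightarrow> nat"
type_synonym 's reaction = "'s vec \<times> 's vec"

definition norm1 :: "('s::finite) vec \<Rightarrow> nat" where
  "norm1 c = (\<Sum>s\<in>UNIV. c s)"

definition is_config :: "('s::finite) vec \<Rightarrow> bool" where
  "is_config c \<longleftrightarrow> norm1 c \<ge> 1"

definition reactions_with :: "'s reaction set \<Rightarrow> 's vec \<Rightarrow> 's reaction set" where
  "reactions_with R r = {\<alpha> \<in> R. fst \<alpha> = r}"

definition applicable :: "'s reaction \<Rightarrow> 's vec \<Rightarrow> bool" where
  "applicable \<alpha> c \<longleftrightarrow> fst \<alpha> \<le> c"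

definition app :: "'s reaction set \<Rightarrow> 's vec \<Rightarrow> 's reaction set" where
  "app R c = {\<alpha> \<in> R. applicable \<alpha> c}"

definition apply_rxn :: "'s reaction \<Rightarrow> 's vec \<Rightarrow> 's vec" where
  "apply_rxn \<alpha> c = (\<lambda>s. c s - fst \<alpha> s + snd \<alpha> s)"

definition edge :: "('s::finite) reaction set \<Rightarrow> 's vec \<Rightarrow> 's vec \<Rightarrow> bool" where
  "edge R c c' \<longleftrightarrow> is_config c \<and> (\<exists>\<alpha>\<in>app R c. c' = apply_rxn \<alpha> c)"

definition reach :: "('s::finite) reaction set \<Rightarrow> 's vec \<Rightarrow> 's vec \<Rightarrow> bool" where
  "reach R = (edge R)\<^sup>*\<^sup>*"

definition crn_protocol :: "('s::finite) reaction set \<Rightarrow> bool" where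
  "crn_protocol R \<longleftrightarrow>
     finite R \<and>
     (\<forall>(r, p)\<in>R. norm1 r \<in> {1, 2} \<and> norm1 r \<le> norm1 p) \<and>
     (\<forall>r. 1 \<le> norm1 r \<and> norm1 r \<le> 2 \<longrightarrow> reactions_with R r \<noteq> {}) \<and>
     (\<forall>r. (r, r) \<in> R \<longrightarrow> reactions_with R r = {(r, r)}) \<and>
     \<comment> \<open>finite density\<close>
     (\<forall>c. is_config c \<longrightarrow> finite {c'. reach R c c'}) \<and>
     (\<exists>K::nat. \<forall>c c'. is_config c \<longrightarrow> reach R c c' \<longrightarrow> norm1 c' \<le> K * norm1 c)"

definition is_scc :: "('s::finite) reaction set \<Rightarrow> 's vec set \<Rightarrow> bool" where
  "is_scc R S \<longleftrightarrow>
     S \<noteq> {} \<and> (\<forall>c\<in>S. is_config c) \<and>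
     (\<forall>c\<in>S. \<forall>d\<in>S. reach R c d) \<and>
     (\<forall>c\<in>S. \<forall>d. is_config d \<and> reach R c d \<and> reach R d c \<longrightarrow> d \<in> S)"

definition is_execution :: "('s::finite) reaction set \<Rightarrow> (nat \<Rightarrow> 's vec) \<Rightarrow> (nat \<Rightarrow> 's reaction) \<Rightarrow> bool" where
  "is_execution R c a \<longleftrightarrow>
     (\<forall>t. is_config (c t) \<and> a t \<in> app R (c t) \<and> c (Suc t) = apply_rxn (a t) (c t))"

definition weakly_fair :: "('s::finite) reaction set \<Rightarrow> (nat \<Rightarrow> 's vec) \<Rightarrow> (nat \<Rightarrow> 's reaction) \<Rightarrow> bool" where
  "weakly_fair R c a \<longleftrightarrow>
     (\<forall>t. \<forall>\<alpha>\<in>app R (c t). \<exists>t'\<ge>t. a t' = \<alpha> \<or> \<alpha> \<notin> app R (c t'))"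

definition escapes :: "('s::finite) reaction set \<Rightarrow> 's reaction \<Rightarrow> 's vec set \<Rightarrow> bool" where
  "escapes R \<alpha> S \<longleftrightarrow> (\<forall>c\<in>S. \<alpha> \<in> app R c \<and> apply_rxn \<alpha> c \<notin> S)"

end

theory Submission
  imports Defs
begin

lemma app_nonempty:
  fixes R :: "('s::finite) reaction set"
  assumes crn: "crn_protocol R" and cf: "is_config c"
  shows "app R c \<noteq> {}"
proof -
  have "norm1 c \<noteq> 0" using cf by (simp add: is_config_def)
  then obtain s where s: "c s \<noteq> 0" by (auto simp: norm1_def)
  define r :: "'s vec" where "r = (\<lambda>x. if x = s then 1 else 0)"
  have "norm1 r = 1" by (simp add: norm1_def r_def)
  then have "reactions_with R r \<noteq> {}" using crn by (simp add: crn_protocol_def)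
  then obtain \<alpha> where "\<alpha> \<in> R" "fst \<alpha> = r" by (auto simp: reactions_with_def)
  moreover have "r \<le> c" using s by (auto simp: r_def le_fun_def)
  ultimately have "\<alpha> \<in> app R c" unfolding app_def applicable_def by auto
  then show ?thesis by blast
qed

definition ESd :: "('s::finite) reaction set \<Rightarrow> 's vec set \<Rightarrow> 's vec \<Rightarrow> 's vec \<Rightarrow> bool" where
  "ESd R S c c' \<longleftrightarrow> c \<in> S \<and> c' \<in> S \<and> (\<exists>\<alpha>\<in>app R c. c' = apply_rxn \<alpha> c)"

lemma inS:
  fixes R :: "('s::finite) reaction set"
  assumes scc: "is_scc R S"
  assumes "c \<in> S" "(edge R)\<^sup>*\<^sup>* c x" "(edge R)\<^sup>*\<^sup>* x d" "d \<in> S"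
  shows "x \<in> S"
proof (cases "x = d")
  case True then show ?thesis using assms by simp
next
  case False
  obtain z where "edge R x z" using assms(4) False by (cases rule: converse_rtranclpE) auto
  then have cx: "is_config x" by (simp add: edge_def)
  have "reach R d c" using scc assms(2,5) unfolding is_scc_def by blast
  then have "reach R x c" using assms(4) by (simp add: reach_def)
  moreover have "reach R c x" using assms(3) by (simp add: reach_def)
  ultimately show ?thesis using scc assms(2) cx unfolding is_scc_def by blast
qed

lemma pathS_aux:
  fixes R :: "('s::finite) reaction set"
  assumes scc: "is_scc R S"
  assumes "(edge R)\<^sup>*\<^sup>* c x" "c \<in> S"
  shows "\<forall>d. (edge R)\<^sup>*\<^sup>* x d \<longrightarrow> d \<in> S \<longrightarrow> (ESd R S)\<^sup>*\<^sup>* c x"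
  using assms(2)
proof (induction rule: rtranclp_induct)
  case base then show ?case by simp
next
  fix y z
  assume h1: "(edge R)\<^sup>*\<^sup>* c y" and h2: "edge R y z"
    and IH: "\<forall>d. (edge R)\<^sup>*\<^sup>* y d \<longrightarrow> d \<in> S \<longrightarrow> (ESd R S)\<^sup>*\<^sup>* c y"
  show "\<forall>d. (edge R)\<^sup>*\<^sup>* z d \<longrightarrow> d \<in> S \<longrightarrow> (ESd R S)\<^sup>*\<^sup>* c z"
  proof (intro allI impI)
    fix d assume p1: "(edge R)\<^sup>*\<^sup>* z d" and p2: "d \<in> S"
    have yd: "(edge R)\<^sup>*\<^sup>* y d" using converse_rtranclp_into_rtranclp[OF h2 p1] .
    have yS: "y \<in> S" using inS[OF scc assms(3) h1 yd p2] .
    have cz: "(edge R)\<^sup>*\<^sup>* c z" using h1 h2 by simp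
    have zS: "z \<in> S" using inS[OF scc assms(3) cz p1 p2] .
    have "ESd R S y z" using h2 yS zS unfolding ESd_def edge_def by blast
    moreover have "(ESd R S)\<^sup>*\<^sup>* c y" using IH yd p2 by blast
    ultimately show "(ESd R S)\<^sup>*\<^sup>* c z" by simp
  qed
qed

lemma pathS:
  fixes R :: "('s::finite) reaction set"
  assumes scc: "is_scc R S"
  assumes "(edge R)\<^sup>*\<^sup>* c x" "c \<in> S" "(edge R)\<^sup>*\<^sup>* x d" "d \<in> S"
  shows "(ESd R S)\<^sup>*\<^sup>* c x"
  using pathS_aux[OF scc assms(2,3)] assms(4,5) by blast

locale L =
  fixes R :: "('s::finite) reaction set" and S :: "'s vec set"
  assumes crn: "crn_protocol R" and scc: "is_scc R S"
    and noesc: "\<not> (\<exists>\<alpha>\<in>R. escapes R \<alpha> S)"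
begin

abbreviation ES where "ES \<equiv> ESd R S"
definition G where "G \<beta> = {d\<in>S. \<beta> \<notin> app R d \<or> apply_rxn \<beta> d \<in> S}"
definition dist where "dist c \<beta> = (LEAST n. \<exists>d\<in>G \<beta>. (ES ^^ n) c d)"

lemma out:
  assumes "c \<in> S"
  shows "\<exists>\<alpha>\<in>app R c. apply_rxn \<alpha> c \<in> S"
proof (cases "\<exists>d\<in>S. d \<noteq> c")
  case True
  then obtain d where d: "d \<in> S" "d \<noteq> c" by auto
  have "reach R c d" using scc assms d(1) unfolding is_scc_def by blast
  then have "ES\<^sup>*\<^sup>* c d" using pathS[OF scc _ assms _ d(1)] unfolding reach_def by blast
  then obtain y where "ES c y" using d(2) by (cases rule: converse_rtranclpE) auto
  then show ?thesis by (auto simp: ESd_def)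
next
  case False
  have "is_config c" using scc assms unfolding is_scc_def by blast
  then obtain \<alpha> where a: "\<alpha> \<in> app R c" using app_nonempty[OF crn] by blast
  then have "\<alpha> \<in> R" by (simp add: app_def)
  then have "\<not> escapes R \<alpha> S" using noesc by blast
  then obtain c' where "c' \<in> S" "\<alpha> \<notin> app R c' \<or> apply_rxn \<alpha> c' \<in> S"
    by (auto simp: escapes_def)
  then show ?thesis using False a assms by auto
qed

lemma G_ne: "\<beta> \<in> R \<Longrightarrow> G \<beta> \<noteq> {}"
  using noesc by (auto simp: G_def escapes_def)

lemma reachG:
  assumes "c \<in> S" "\<beta> \<in> R"
  shows "\<exists>n. \<exists>d\<in>G \<beta>. (ES ^^ n) c d"
proof -
  obtain d where d: "d \<in> G \<beta>" using G_ne assms by blast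
  then have dS: "d \<in> S" by (simp add: G_def)
  have "reach R c d" using scc assms(1) dS unfolding is_scc_def by blast
  then have "ES\<^sup>*\<^sup>* c d" using pathS[OF scc _ assms(1) _ dS] unfolding reach_def by blast
  then show ?thesis using d by (meson rtranclp_imp_relpowp)
qed

lemma dist_step:
  assumes "c \<in> S" "\<beta> \<in> R" "c \<notin> G \<beta>"
  shows "\<exists>\<alpha>\<in>app R c. apply_rxn \<alpha> c \<in> S \<and> dist (apply_rxn \<alpha> c) \<beta> < dist c \<beta>"
proof -
  define n where "n = dist c \<beta>"
  have "\<exists>d\<in>G \<beta>. (ES ^^ n) c d"
    using LeastI_ex[OF reachG[OF assms(1,2)]] unfolding n_def dist_def .
  then obtain d where d: "d \<in> G \<beta>" "(ES ^^ n) c d" by blast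
  have "n \<noteq> 0"
  proof
    assume "n = 0"
    then have "c = d" using d(2) by simp
    then show False using d(1) assms(3) by simp
  qed
  then obtain m where m: "n = Suc m" by (cases n) auto
  have "(ES ^^ Suc m) c d" using d(2) m by simp
  then have "\<exists>y. ES c y \<and> (ES ^^ m) y d" by (rule relpowp_Suc_D2)
  then obtain y where y: "ES c y" "(ES ^^ m) y d" by blast
  have "dist y \<beta> \<le> m" unfolding dist_def
    by (rule Least_le) (use y(2) d(1) in blast)
  moreover obtain \<alpha> where "\<alpha> \<in> app R c" "y = apply_rxn \<alpha> c" "y \<in> S"
    using y(1) unfolding ESd_def by blast
  ultimately show ?thesis using m n_def by auto
qed

lemma good_step:
  assumes "c \<in> S" "c \<in> G \<beta>"
  shows "\<exists>\<alpha>\<in>app R c. apply_rxn \<alpha> c \<in> S \<and> (\<beta> \<in> app R c \<longrightarrow> \<alpha> = \<beta>)"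
proof (cases "\<beta> \<in> app R c")
  case True then show ?thesis using assms by (auto simp: G_def)
next
  case False then show ?thesis using out[OF assms(1)] by auto
qed

end

locale L2 = L R S for R :: "('s::finite) reaction set" and S +
  fixes e :: "nat \<Rightarrow> 's reaction"
  assumes bij: "bij_betw e {0..<card R} R"
begin

definition nxt :: "'s vec \<times> nat \<Rightarrow> 's reaction \<times> 's vec \<times> nat" where
"nxt x = (let c = fst x; k = snd x; \<beta> = e (k mod card R) in
  if c \<in> G \<beta> then (let \<alpha> = SOME \<alpha>. \<alpha>\<in>app R c \<and> apply_rxn \<alpha> c \<in> S \<and> (\<beta>\<in>app R c \<longrightarrow> \<alpha>=\<beta>)
     in (\<alpha>, apply_rxn \<alpha> c, Suc k))
  else (let \<alpha> = SOME \<alpha>. \<alpha>\<in>app R c \<and> apply_rxn \<alpha> c \<in> S \<and> dist (apply_rxn \<alpha> c) \<beta> < dist c \<beta>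
     in (\<alpha>, apply_rxn \<alpha> c, k)))"

lemma S_ne: "S \<noteq> {}" using scc unfolding is_scc_def by blast

lemma R_ne: "R \<noteq> {}"
proof -
  obtain c where "c \<in> S" using S_ne by blast
  then obtain \<alpha> where "\<alpha> \<in> app R c" using out by blast
  then show ?thesis by (auto simp: app_def)
qed

lemma N_pos: "card R > 0"
  using R_ne crn by (simp add: crn_protocol_def card_gt_0_iff)

lemma e_in: "e (k mod card R) \<in> R"
  using bij N_pos by (auto simp: bij_betw_def)

lemma nxt_prop:
  assumes "c \<in> S" "nxt (c,k) = (\<alpha>,c',k')"
  shows "\<alpha>\<in>app R c \<and> c' = apply_rxn \<alpha> c \<and> c'\<in>S \<and>
    ((k' = Suc k \<and> (e (k mod card R) \<in> app R c \<longrightarrow> \<alpha> = e (k mod card R))) \<or>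
     (k' = k \<and> dist c' (e (k mod card R)) < dist c (e (k mod card R))))"
proof (cases "c \<in> G (e (k mod card R))")
  case True
  define \<beta> where "\<beta> = e (k mod card R)"
  have ex: "\<exists>\<alpha>. \<alpha>\<in>app R c \<and> apply_rxn \<alpha> c \<in> S \<and> (\<beta>\<in>app R c \<longrightarrow> \<alpha>=\<beta>)"
    using good_step[OF assms(1)] True \<beta>_def by blast
  have "nxt (c,k) = (let \<alpha> = SOME \<alpha>. \<alpha>\<in>app R c \<and> apply_rxn \<alpha> c \<in> S \<and> (\<beta>\<in>app R c \<longrightarrow> \<alpha>=\<beta>)
     in (\<alpha>, apply_rxn \<alpha> c, Suc k))" using True by (simp add: nxt_def \<beta>_def Let_def)
  then show ?thesis using someI_ex[OF ex] assms(2) \<beta>_def by (auto simp: Let_def)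
next
  case False
  define \<beta> where "\<beta> = e (k mod card R)"
  have ex: "\<exists>\<alpha>. \<alpha>\<in>app R c \<and> apply_rxn \<alpha> c \<in> S \<and> dist (apply_rxn \<alpha> c) \<beta> < dist c \<beta>"
    using dist_step[OF assms(1) e_in] False \<beta>_def by blast
  have "nxt (c,k) = (let \<alpha> = SOME \<alpha>. \<alpha>\<in>app R c \<and> apply_rxn \<alpha> c \<in> S \<and> dist (apply_rxn \<alpha> c) \<beta> < dist c \<beta>
     in (\<alpha>, apply_rxn \<alpha> c, k))" using False by (simp add: nxt_def \<beta>_def Let_def)
  then show ?thesis using someI_ex[OF ex] assms(2) \<beta>_def by (auto simp: Let_def)
qed

primrec run :: "nat \<Rightarrow> 's vec \<times> nat" where
  "run 0 = (SOME c. c \<in> S, 0)"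
| "run (Suc n) = snd (nxt (run n))"

definition cc where "cc t = fst (run t)"
definition kk where "kk t = snd (run t)"
definition aa where "aa t = fst (nxt (run t))"

lemma stp_gen:
  assumes "cc t \<in> S"
  shows "aa t \<in> app R (cc t) \<and> cc (Suc t) = apply_rxn (aa t) (cc t) \<and> cc (Suc t) \<in> S \<and>
    ((kk (Suc t) = Suc (kk t) \<and> (e (kk t mod card R) \<in> app R (cc t) \<longrightarrow> aa t = e (kk t mod card R))) \<or>
     (kk (Suc t) = kk t \<and> dist (cc (Suc t)) (e (kk t mod card R)) < dist (cc t) (e (kk t mod card R))))"
proof -
  obtain \<alpha> c' k' where n: "nxt (run t) = (\<alpha>, c', k')" by (metis prod_cases3)
  have r: "run t = (cc t, kk t)" by (simp add: cc_def kk_def)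
  have eqs: "aa t = \<alpha>" "cc (Suc t) = c'" "kk (Suc t) = k'" using n by (auto simp: aa_def cc_def kk_def)
  have n': "nxt (cc t, kk t) = (\<alpha>, c', k')" using n r by simp
  show ?thesis unfolding eqs using nxt_prop[OF assms n'] .
qed

lemma run_S: "cc t \<in> S"
proof (induction t)
  case 0 then show ?case using S_ne by (simp add: cc_def some_in_eq)
next
  case (Suc t) then show ?case using stp_gen by blast
qed

lemmas stp = stp_gen[OF run_S]

lemma advA: "\<exists>t'\<ge>t. kk t' = kk t \<and> kk (Suc t') = Suc (kk t)"
proof (induction "dist (cc t) (e (kk t mod card R))" arbitrary: t rule: less_induct)
  case less
  have disj: "(kk (Suc t) = Suc (kk t) \<and> (e (kk t mod card R) \<in> app R (cc t) \<longrightarrow> aa t = e (kk t mod card R))) \<or>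
     (kk (Suc t) = kk t \<and> dist (cc (Suc t)) (e (kk t mod card R)) < dist (cc t) (e (kk t mod card R)))"
    using stp[of t] by blast
  from disj show ?case
  proof
    assume "kk (Suc t) = Suc (kk t) \<and> (e (kk t mod card R) \<in> app R (cc t) \<longrightarrow> aa t = e (kk t mod card R))"
    then show ?case by auto
  next
    assume h: "kk (Suc t) = kk t \<and> dist (cc (Suc t)) (e (kk t mod card R)) < dist (cc t) (e (kk t mod card R))"
    then obtain t' where "t' \<ge> Suc t" "kk t' = kk (Suc t)" "kk (Suc t') = Suc (kk (Suc t))"
      using less[of "Suc t"] by auto
    then show ?case using h by (intro exI[of _ t']) auto
  qed
qed

lemma advB: "K \<ge> kk t \<Longrightarrow> \<exists>t'\<ge>t. kk t' = K \<and> kk (Suc t') = Suc K"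
proof (induction "K - kk t" arbitrary: t)
  case 0 then have "K = kk t" by simp
  then show ?case using advA[of t] by auto
next
  case (Suc d)
  obtain t1 where t1: "t1 \<ge> t" "kk t1 = kk t" "kk (Suc t1) = Suc (kk t)" using advA[of t] by auto
  have "d = K - kk (Suc t1)" "K \<ge> kk (Suc t1)" using Suc.hyps(2) Suc.prems t1(3) by auto
  then obtain t' where "t' \<ge> Suc t1" "kk t' = K" "kk (Suc t') = Suc K" using Suc.hyps(1) by blast
  then show ?case using t1(1) by (intro exI[of _ t']) auto
qed

lemma exec: "is_execution R cc aa"
  unfolding is_execution_def
proof (intro allI conjI)
  fix t
  show "is_config (cc t)" using run_S[of t] scc unfolding is_scc_def by blast
  show "aa t \<in> app R (cc t)" using stp[of t] by blast
  show "cc (Suc t) = apply_rxn (aa t) (cc t)" using stp[of t] by blast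
qed

lemma fair: "weakly_fair R cc aa"
  unfolding weakly_fair_def
proof (intro allI ballI)
  fix t \<alpha> assume a: "\<alpha> \<in> app R (cc t)"
  then have "\<alpha> \<in> R" by (simp add: app_def)
  then have "\<alpha> \<in> e ` {0..<card R}" using bij by (simp add: bij_betw_def)
  then obtain j where j: "j < card R" "e j = \<alpha>" by auto
  define K where "K = kk t * card R + j"
  have Km: "K mod card R = j" using j(1) by (simp add: K_def)
  have "kk t * 1 \<le> kk t * card R" using N_pos by (intro mult_le_mono2) simp
  then have "kk t \<le> kk t * card R" by simp
  then have "K \<ge> kk t" unfolding K_def by (rule trans_le_add1)
  then obtain t' where t': "t' \<ge> t" "kk t' = K" "kk (Suc t') = Suc K" using advB by blast
  have "e (kk t' mod card R) \<in> app R (cc t') \<longrightarrow> aa t' = e (kk t' mod card R)"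
  proof -
    have ne: "kk (Suc t') \<noteq> kk t'" using t'(2,3) by simp
    show ?thesis using stp[of t'] ne by blast
  qed
  then have "\<alpha> \<in> app R (cc t') \<longrightarrow> aa t' = \<alpha>" using t'(2) Km j(2) by simp
  then show "\<exists>t'\<ge>t. aa t' = \<alpha> \<or> \<alpha> \<notin> app R (cc t')" using t'(1) by blast
qed

end

theorem lemma3p1:
  fixes R :: "('s::finite) reaction set" and S :: "'s vec set"
  assumes "crn_protocol R" and "is_scc R S"
  shows "(\<exists>c a. is_execution R c a \<and> weakly_fair R c a \<and> (\<forall>t. c t \<in> S))
         \<longleftrightarrow> \<not> (\<exists>\<alpha>\<in>R. escapes R \<alpha> S)"
proof
  assume "\<exists>c a. is_execution R c a \<and> weakly_fair R c a \<and> (\<forall>t. c t \<in> S)"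
  then obtain c a where ex: "is_execution R c a" and wf: "weakly_fair R c a" and inS: "\<forall>t. c t \<in> S"
    by blast
  show "\<not> (\<exists>\<alpha>\<in>R. escapes R \<alpha> S)"
  proof
    assume "\<exists>\<alpha>\<in>R. escapes R \<alpha> S"
    then obtain \<alpha> where esc: "escapes R \<alpha> S" by blast
    have "\<alpha> \<in> app R (c 0)" using esc inS by (simp add: escapes_def)
    then obtain t' where t': "a t' = \<alpha> \<or> \<alpha> \<notin> app R (c t')" using wf
      unfolding weakly_fair_def by blast
    have ap: "\<alpha> \<in> app R (c t')" "apply_rxn \<alpha> (c t') \<notin> S" using esc inS by (auto simp: escapes_def)
    then have "a t' = \<alpha>" using t' by blast
    then have "c (Suc t') = apply_rxn \<alpha> (c t')" using ex by (simp add: is_execution_def)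
    then show False using ap inS by metis
  qed
next
  assume ne: "\<not> (\<exists>\<alpha>\<in>R. escapes R \<alpha> S)"
  have "finite R" using assms(1) by (simp add: crn_protocol_def)
  then obtain e where e: "bij_betw e {0..<card R} R" using ex_bij_betw_nat_finite by blast
  interpret L2 R S e using assms ne e by unfold_locales auto
  show "\<exists>c a. is_execution R c a \<and> weakly_fair R c a \<and> (\<forall>t. c t \<in> S)"
    using exec fair run_S by blast
qed

end
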